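(* Let $p>1$ and let ${\bf a}=(a_n)_{n\in\mathbb N}$ be a good weight for the dominated weighted ergodic theorem in $L^p$. Then the Nörlund matrix $N_{\bf a}$ is bounded on $\ell^p(\mathbb N)$. Moreover, for every non-increasing sequence $(b_n)_{n\in\mathbb N}$ of nonnegative numbers, with ${\bf c}:=(a_nb_n)_{n\in\mathbb N}$, the Nörlund matrix $N_{\bf c}$ is bounded on $\ell^p(\mathbb N)$.
   Context: For a complex sequence ${\bf a}=(a_n)_{n\in\mathbb N}$ set $A_i:=\sum_{k=0}^i|a_k|$. The Nörlund matrix $N_{\bf a}=(a_{ij})_{i,j\in\mathbb N}$ has entries $a_{ij}=a_{i-j}/A_i$ if $0\le j\le i$ and $A_i>0$, and $a_{ij}=0$ if $j>i$ or $A_i=0$; it is bounded on $\ell^p(\mathbb N)$ if there is $C_p$ with $\|N_{\bf a}u\|_{\ell^p}\le C_p\|u\|_{\ell^p}$ for all finitely supported $u$. (For ${\bf c}$, $A_i$ is replaced by $\sum_{k=0}^i|c_k|$.) The sequence ${\bf a}$ is a good weight for the dominated weighted ergodic theorem in $L^p$ if there is $C>0$ such that for every probability-measure-preserving system $(X,\Sigma,\nu,\tau)$ and every $f\in L^p(\nu)$, $\|\sup_{n\ge0}\frac1{A_n}|\sum_{k=0}^na_kf\circ\tau^k|\|_{L^p(\nu)}\le C\|f\|_{L^p(\nu)}$, with the quotient read as $0$ when $A_n=0$. *)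

theory Defs
  imports "HOL-Probability.Probability"
begin

definition norlund :: "(nat \<Rightarrow> complex) \<Rightarrow> nat \<Rightarrow> nat \<Rightarrow> complex" where
  "norlund a i j =
     (let A = (\<Sum>k\<le>i. norm (a k)) in
      if j \<le> i \<and> A > 0 then a (i - j) / complex_of_real A else 0)"

text \<open>Boundedness of an infinite matrix on l^p(N), tested on finitely supported vectors:
  ||M u||_p \<le> C ||u||_p, where the l^p norm of M u is the supremum of its partial sums.\<close>
definition lp_bounded :: "real \<Rightarrow> (nat \<Rightarrow> nat \<Rightarrow> complex) \<Rightarrow> bool" where
  "lp_bounded p M \<longleftrightarrow>
     (\<exists>C. \<forall>u :: nat \<Rightarrow> complex. finite {j. u j \<noteq> 0} \<longrightarrow>
        (\<forall>n. (\<Sum>i<n. norm (\<Sum>j\<in>{j. u j \<noteq> 0}. M i j * u j) powr p) powr (1 / p)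
             \<le> C * (\<Sum>j\<in>{j. u j \<noteq> 0}. norm (u j) powr p) powr (1 / p)))"

definition pmp_system :: "real measure \<Rightarrow> (real \<Rightarrow> real) \<Rightarrow> bool" where
  "pmp_system M T \<longleftrightarrow> prob_space M \<and> T \<in> measurable M M \<and> distr M M T = M"

text \<open>Good weight for the dominated weighted ergodic theorem in L^p:
  ||sup_n |1/A_n sum_{k \<le> n} a_k f o T^k| ||_p \<le> C ||f||_p, written with p-th powers
  (the quotient is 0 when A_n = 0 since x / 0 = 0).\<close>
definition good_weight :: "real \<Rightarrow> (nat \<Rightarrow> complex) \<Rightarrow> bool" where
  "good_weight p a \<longleftrightarrow>
     (\<exists>C>0. \<forall>M T (f :: real \<Rightarrow> complex).
        pmp_system M T \<and> f \<in> borel_measurable M \<and>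
        (\<integral>\<^sup>+ x. ennreal (norm (f x) powr p) \<partial>M) < \<infinity> \<longrightarrow>
        (\<integral>\<^sup>+ x. (SUP n. ennreal ((norm (\<Sum>k\<le>n. a k * f ((T ^^ k) x))
                                    / (\<Sum>k\<le>n. norm (a k))) powr p)) \<partial>M)
          \<le> ennreal (C powr p) * (\<integral>\<^sup>+ x. ennreal (norm (f x) powr p) \<partial>M))"

end

theory Submission
  imports Defs
begin

lemma abel_id:
  fixes a b x :: "nat \<Rightarrow> 'a::comm_ring"
  shows "(\<Sum>k\<le>n. a k * b k * x k) =
     b n * (\<Sum>k\<le>n. a k * x k) + (\<Sum>m<n. (b m - b (Suc m)) * (\<Sum>k\<le>m. a k * x k))"
proof (induction n)
  case 0 then show ?case by (simp add: algebra_simps)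
next
  case (Suc n)
  then show ?case by (simp add: algebra_simps)
qed

lemma abel_bound:
  fixes a x :: "nat \<Rightarrow> complex" and b :: "nat \<Rightarrow> real"
  assumes b0: "\<And>n. 0 \<le> b n" and am: "antimono b" and K: "0 \<le> K"
    and H: "\<And>m. m \<le> n \<Longrightarrow> norm (\<Sum>k\<le>m. a k * x k) \<le> K * (\<Sum>k\<le>m. norm (a k))"
  shows "norm (\<Sum>k\<le>n. a k * complex_of_real (b k) * x k) \<le> K * (\<Sum>k\<le>n. norm (a k) * b k)"
proof -
  have dec: "b (Suc m) \<le> b m" for m using am by (simp add: antimono_def)
  have "norm (\<Sum>k\<le>n. a k * complex_of_real (b k) * x k)
     = norm (complex_of_real (b n) * (\<Sum>k\<le>n. a k * x k) + (\<Sum>m<n. (complex_of_real (b m) - complex_of_real (b (Suc m))) * (\<Sum>k\<le>m. a k * x k)))"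
    by (subst abel_id) simp
  also have "\<dots> \<le> norm (complex_of_real (b n) * (\<Sum>k\<le>n. a k * x k)) + (\<Sum>m<n. norm ((complex_of_real (b m) - complex_of_real (b (Suc m))) * (\<Sum>k\<le>m. a k * x k)))"
    by (rule order_trans[OF norm_triangle_ineq]) (simp add: norm_sum)
  also have "\<dots> = b n * norm (\<Sum>k\<le>n. a k * x k) + (\<Sum>m<n. (b m - b (Suc m)) * norm (\<Sum>k\<le>m. a k * x k))"
  proof -
    have "norm (complex_of_real (b m) - complex_of_real (b (Suc m))) = b m - b (Suc m)" for m
      using dec[of m] by (metis abs_of_nonneg diff_ge_0_iff_ge norm_of_real of_real_diff)
    then show ?thesis using b0 by (simp add: norm_mult)
  qed
  also have "\<dots> \<le> b n * (K * (\<Sum>k\<le>n. norm (a k))) + (\<Sum>m<n. (b m - b (Suc m)) * (K * (\<Sum>k\<le>m. norm (a k))))"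
    apply (intro add_mono sum_mono mult_left_mono H)
    using b0 dec by (auto simp: diff_ge_0_iff_ge)
  also have "\<dots> = K * (b n * (\<Sum>k\<le>n. norm (a k) * 1) + (\<Sum>m<n. (b m - b (Suc m)) * (\<Sum>k\<le>m. norm (a k) * 1)))"
    by (simp add: algebra_simps sum_distrib_left)
  also have "\<dots> = K * (\<Sum>k\<le>n. norm (a k) * b k * 1)"
    by (subst abel_id[of "\<lambda>k. norm (a k)" b "\<lambda>_. 1"]) simp
  finally show ?thesis by simp
qed


definition R :: "(nat \<Rightarrow> complex) \<Rightarrow> (nat \<Rightarrow> complex) \<Rightarrow> nat \<Rightarrow> nat \<Rightarrow> real" where
  "R a g i n = norm (\<Sum>k\<le>n. a k * g (i - k)) / (\<Sum>k\<le>n. norm (a k))"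

definition Mx :: "real \<Rightarrow> (nat \<Rightarrow> complex) \<Rightarrow> (nat \<Rightarrow> complex) \<Rightarrow> nat \<Rightarrow> real" where
  "Mx p a g i = Max ((\<lambda>n. R a g i n powr p) ` {..i})"

definition FI :: "real \<Rightarrow> (nat \<Rightarrow> complex) \<Rightarrow> bool" where
  "FI p a \<longleftrightarrow> (\<exists>C>0. \<forall>N g. (\<Sum>i<N. Mx p a g i) \<le> C powr p * (\<Sum>i<N. norm (g i) powr p))"

lemma R_nonneg: "0 \<le> R a g i n" unfolding R_def by (simp add: sum_nonneg)

lemma Mx_ge: "n \<le> i \<Longrightarrow> R a g i n powr p \<le> Mx p a g i"
  unfolding Mx_def by (rule Max_ge) auto

lemma Mx_in: "\<exists>n\<le>i. Mx p a g i = R a g i n powr p"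
proof -
  have "Mx p a g i \<in> (\<lambda>n. R a g i n powr p) ` {..i}"
    unfolding Mx_def by (rule Max_in) auto
  then show ?thesis by auto
qed

lemma FI_imp_bounded:
  assumes p: "p > 0" and "FI p a"
  shows "lp_bounded p (norlund a)"
proof -
  obtain C where C: "C > 0" and H: "\<And>N g. (\<Sum>i<N. Mx p a g i) \<le> C powr p * (\<Sum>i<N. norm (g i) powr p)"
    using assms unfolding FI_def by blast
  show ?thesis unfolding lp_bounded_def
  proof (intro exI allI impI)
    fix u :: "nat \<Rightarrow> complex" and n
    assume fin: "finite {j. u j \<noteq> 0}"
    define U where "U = {j. u j \<noteq> 0}"
    have row: "norm (\<Sum>j\<in>U. norlund a i j * u j) = R a u i i" for i
    proof -
      define A where "A = (\<Sum>k\<le>i. norm (a k))"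
      have s1: "(\<Sum>j\<in>U. norlund a i j * u j) = (\<Sum>j\<le>i. norlund a i j * u j)"
      proof -
        have "(\<Sum>j\<in>U. norlund a i j * u j) = (\<Sum>j\<in>U \<union> {..i}. norlund a i j * u j)"
          by (rule sum.mono_neutral_left) (auto simp: U_def fin norlund_def)
        also have "\<dots> = (\<Sum>j\<le>i. norlund a i j * u j)"
          by (rule sum.mono_neutral_right) (auto simp: U_def fin norlund_def)
        finally show ?thesis .
      qed
      have rev: "(\<Sum>j\<le>i. a (i - j) * u j) = (\<Sum>k\<le>i. a k * u (i - k))"
        by (rule sum.reindex_bij_witness[where i="\<lambda>k. i - k" and j="\<lambda>k. i - k"]) auto
      show ?thesis
      proof (cases "A > 0")
        case True
        have "(\<Sum>j\<le>i. norlund a i j * u j) = (\<Sum>j\<le>i. a (i - j) * u j) / complex_of_real A"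
          using True by (simp add: norlund_def A_def[symmetric] sum_divide_distrib)
        then show ?thesis using True s1 rev
          by (simp add: R_def A_def[symmetric] norm_divide)
      next
        case False
        moreover have "A \<ge> 0" unfolding A_def by (rule sum_nonneg) simp
        ultimately have "A = 0" by linarith
        then show ?thesis using s1 by (simp add: R_def A_def[symmetric] norlund_def)
      qed
    qed
    have "(\<Sum>i<n. norm (\<Sum>j\<in>U. norlund a i j * u j) powr p) \<le> (\<Sum>i<n. Mx p a u i)"
      by (intro sum_mono) (simp add: row Mx_ge)
    also have "\<dots> \<le> C powr p * (\<Sum>i<n. norm (u i) powr p)" by (rule H)
    also have "(\<Sum>i<n. norm (u i) powr p) \<le> (\<Sum>j\<in>U. norm (u j) powr p)"
    proof -
      have "(\<Sum>i<n. norm (u i) powr p) = (\<Sum>i\<in>{..<n} \<inter> U. norm (u i) powr p)"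
        by (rule sum.mono_neutral_right) (auto simp: U_def)
      also have "\<dots> \<le> (\<Sum>j\<in>U. norm (u j) powr p)"
        by (rule sum_mono2) (auto simp: U_def fin)
      finally show ?thesis .
    qed
    then have "C powr p * (\<Sum>i<n. norm (u i) powr p) \<le> C powr p * (\<Sum>j\<in>U. norm (u j) powr p)"
      by (simp add: mult_left_mono)
    finally have le: "(\<Sum>i<n. norm (\<Sum>j\<in>U. norlund a i j * u j) powr p) \<le> C powr p * (\<Sum>j\<in>U. norm (u j) powr p)" .
    have "(\<Sum>i<n. norm (\<Sum>j\<in>U. norlund a i j * u j) powr p) powr (1/p) \<le> (C powr p * (\<Sum>j\<in>U. norm (u j) powr p)) powr (1/p)"
      by (rule powr_mono2) (use le p in \<open>auto intro: sum_nonneg\<close>)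
    also have "\<dots> = C * (\<Sum>j\<in>U. norm (u j) powr p) powr (1/p)"
      using C p by (simp add: powr_mult sum_nonneg powr_powr)
    finally show "(\<Sum>i<n. norm (\<Sum>j\<in>{j. u j \<noteq> 0}. norlund a i j * u j) powr p) powr (1 / p)
         \<le> C * (\<Sum>j\<in>{j. u j \<noteq> 0}. norm (u j) powr p) powr (1 / p)" by (simp add: U_def)
  qed
qed

lemma FI_mult:
  assumes p: "p > 0" and "FI p a" and b0: "\<And>n. 0 \<le> b n" and am: "antimono b"
  shows "FI p (\<lambda>n. a n * complex_of_real (b n))"
proof -
  obtain C where C: "C > 0" and H: "\<And>N g. (\<Sum>i<N. Mx p a g i) \<le> C powr p * (\<Sum>i<N. norm (g i) powr p)"
    using assms unfolding FI_def by blast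
  have pt: "Mx p (\<lambda>n. a n * complex_of_real (b n)) g i \<le> Mx p a g i" for g i
  proof -
    define K where "K = Max ((\<lambda>n. R a g i n) ` {..i})"
    have "K \<in> (\<lambda>n. R a g i n) ` {..i}" unfolding K_def by (rule Max_in) auto
    then obtain n1 where n1: "n1 \<le> i" "K = R a g i n1" by auto
    have K0: "0 \<le> K" using n1 R_nonneg by simp
    have KR: "R a g i n \<le> K" if "n \<le> i" for n unfolding K_def by (rule Max_ge) (use that in auto)
    have "R (\<lambda>n. a n * complex_of_real (b n)) g i n \<le> K" if "n \<le> i" for n
    proof -
      have hyp: "norm (\<Sum>k\<le>m. a k * g (i - k)) \<le> K * (\<Sum>k\<le>m. norm (a k))" if "m \<le> n" for m
      proof (cases "(\<Sum>k\<le>m. norm (a k)) > 0")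
        case True
        have "R a g i m \<le> K" using KR \<open>m \<le> n\<close> \<open>n \<le> i\<close> by simp
        then show ?thesis using True by (simp add: R_def divide_le_eq)
      next
        case False
        moreover have "(\<Sum>k\<le>m. norm (a k)) \<ge> 0" by (rule sum_nonneg) simp
        ultimately have "(\<Sum>k\<le>m. norm (a k)) = 0" by linarith
        then have "\<forall>k\<in>{..m}. a k = 0" by (subst (asm) sum_nonneg_eq_0_iff) auto
        then show ?thesis by simp
      qed
      have ab: "norm (\<Sum>k\<le>n. a k * complex_of_real (b k) * g (i - k)) \<le> K * (\<Sum>k\<le>n. norm (a k) * b k)"
        by (rule abel_bound[OF b0 am K0 hyp])
      have nc: "norm (a k * complex_of_real (b k)) = norm (a k) * b k" for k
        using b0[of k] by (simp add: norm_mult)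
      show ?thesis
      proof (cases "(\<Sum>k\<le>n. norm (a k) * b k) > 0")
        case True
        have eq: "R (\<lambda>n. a n * complex_of_real (b n)) g i n = norm (\<Sum>k\<le>n. a k * complex_of_real (b k) * g (i - k)) / (\<Sum>k\<le>n. norm (a k) * b k)"
          by (simp add: R_def nc)
        show ?thesis using ab by (simp only: eq pos_divide_le_eq[OF True])
      next
        case False
        moreover have "(\<Sum>k\<le>n. norm (a k) * b k) \<ge> 0" by (rule sum_nonneg) (simp add: b0)
        ultimately have "(\<Sum>k\<le>n. norm (a k) * b k) = 0" by linarith
        then show ?thesis using K0 by (simp add: R_def nc)
      qed
    qed
    moreover obtain n0 where "n0 \<le> i" "Mx p (\<lambda>n. a n * complex_of_real (b n)) g i = R (\<lambda>n. a n * complex_of_real (b n)) g i n0 powr p"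
      using Mx_in by blast
    ultimately have "Mx p (\<lambda>n. a n * complex_of_real (b n)) g i \<le> K powr p"
      by (simp add: powr_mono2 p R_nonneg less_imp_le)
    also have "\<dots> \<le> Mx p a g i" using n1 Mx_ge by simp
    finally show ?thesis .
  qed
  show ?thesis unfolding FI_def
  proof (intro exI[of _ C] conjI C allI)
    fix N g
    show "(\<Sum>i<N. Mx p (\<lambda>n. a n * complex_of_real (b n)) g i) \<le> C powr p * (\<Sum>i<N. norm (g i) powr p)"
      by (rule order_trans[OF sum_mono[OF pt] H])
  qed
qed


definition shiftT :: "nat \<Rightarrow> real \<Rightarrow> real" where
  "shiftT N x = (if x = 0 then real N - 1 else x - 1)"

lemma Mx_nonneg: "0 \<le> Mx p a g i"
  using Mx_ge[of 0 i a g p] by (meson order_trans powr_ge_zero zero_le)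

lemma shiftT_iter: "k \<le> i \<Longrightarrow> (shiftT N ^^ k) (real i) = real (i - k)"
proof (induction k)
  case 0 then show ?case by simp
next
  case (Suc k)
  then have "(shiftT N ^^ Suc k) (real i) = shiftT N (real (i - k))" by simp
  also have "\<dots> = real (i - Suc k)" using Suc.prems by (simp add: shiftT_def of_nat_diff)
  finally show ?case .
qed

lemma shiftT_pmp:
  assumes N: "N > 0"
  shows "pmp_system (measure_pmf (pmf_of_set (real ` {..<N}))) (shiftT N)"
proof -
  let ?S = "real ` {..<N}"
  have ne: "?S \<noteq> {}" using N by auto
  have fin: "finite ?S" by simp
  have sub: "shiftT N ` ?S \<subseteq> ?S"
  proof
    fix y assume "y \<in> shiftT N ` ?S"
    then obtain i where i: "i < N" "y = shiftT N (real i)" by auto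
    show "y \<in> ?S"
    proof (cases "i = 0")
      case True
      then have "y = real (N - 1)" using i N by (simp add: shiftT_def of_nat_diff)
      then show ?thesis using N by (metis diff_less image_eqI lessThan_iff zero_less_one)
    next
      case False
      then have "y = real (i - 1)" using i by (simp add: shiftT_def of_nat_diff)
      then show ?thesis using i by auto
    qed
  qed
  have inj: "inj_on (shiftT N) ?S"
    using N by (auto simp: inj_on_def shiftT_def)
  have img: "shiftT N ` ?S = ?S" by (rule endo_inj_surj[OF fin sub inj])
  have "distr (measure_pmf (pmf_of_set ?S)) (measure_pmf (pmf_of_set ?S)) (shiftT N)
      = distr (measure_pmf (pmf_of_set ?S)) (count_space UNIV) (shiftT N)"
    by (rule distr_cong) auto
  also have "\<dots> = measure_pmf (map_pmf (shiftT N) (pmf_of_set ?S))"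
    by (simp add: map_pmf_rep_eq)
  also have "\<dots> = measure_pmf (pmf_of_set ?S)"
    by (simp add: map_pmf_of_set_inj[OF inj ne fin] img)
  finally show ?thesis unfolding pmp_system_def
    by (simp add: measure_pmf.prob_space_axioms)
qed

lemma good_imp_FI:
  assumes p: "p > 0" and gw: "good_weight p a"
  shows "FI p a"
proof -
  obtain C where C: "C > 0" and H: "\<And>M T (f :: real \<Rightarrow> complex).
        pmp_system M T \<and> f \<in> borel_measurable M \<and>
        (\<integral>\<^sup>+ x. ennreal (norm (f x) powr p) \<partial>M) < \<infinity> \<Longrightarrow>
        (\<integral>\<^sup>+ x. (SUP n. ennreal ((norm (\<Sum>k\<le>n. a k * f ((T ^^ k) x))
                                    / (\<Sum>k\<le>n. norm (a k))) powr p)) \<partial>M)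
          \<le> ennreal (C powr p) * (\<integral>\<^sup>+ x. ennreal (norm (f x) powr p) \<partial>M)"
    using gw unfolding good_weight_def by blast
  show ?thesis unfolding FI_def
  proof (intro exI[of _ C] conjI C allI)
    fix N and g :: "nat \<Rightarrow> complex"
    show "(\<Sum>i<N. Mx p a g i) \<le> C powr p * (\<Sum>i<N. norm (g i) powr p)"
    proof (cases "N = 0")
      case True then show ?thesis by simp
    next
      case False
      then have N: "N > 0" by simp
      let ?S = "real ` {..<N}"
      define M where "M = measure_pmf (pmf_of_set ?S)"
      define f where "f = (\<lambda>x::real. g (nat \<lfloor>x\<rfloor>))"
      have ne: "?S \<noteq> {}" using N by auto
      have fin: "finite ?S" by simp
      have cardS: "card ?S = N" by (simp add: card_image inj_on_def)
      have intS: "nn_integral M h = (\<Sum>i<N. h (real i)) / of_nat N" for h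
        unfolding M_def nn_integral_pmf_of_set[OF ne fin] cardS
        by (simp add: sum.reindex inj_on_def)
      have fi: "f (real i) = g i" for i by (simp add: f_def)
      define G where "G = (\<Sum>i<N. norm (g i) powr p)"
      define X where "X = (\<Sum>i<N. Mx p a g i)"
      have G0: "G \<ge> 0" unfolding G_def by (rule sum_nonneg) simp
      have X0: "X \<ge> 0" unfolding X_def
        by (rule sum_nonneg) (rule Mx_nonneg)
      have NN: "(of_nat N :: ennreal) = ennreal (real N)" by (simp add: ennreal_of_nat_eq_real_of_nat)
      have rhs: "(\<integral>\<^sup>+ x. ennreal (norm (f x) powr p) \<partial>M) = ennreal (G / real N)"
        unfolding intS fi G_def NN using N
        by (simp add: sum_ennreal divide_ennreal sum_nonneg)
      have fin_int: "(\<integral>\<^sup>+ x. ennreal (norm (f x) powr p) \<partial>M) < \<infinity>"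
        unfolding rhs by simp
      have pmp: "pmp_system M (shiftT N)" unfolding M_def by (rule shiftT_pmp[OF N])
      have meas: "f \<in> borel_measurable M" unfolding M_def by simp
      have main: "(\<integral>\<^sup>+ x. (SUP n. ennreal ((norm (\<Sum>k\<le>n. a k * f ((shiftT N ^^ k) x))
                                    / (\<Sum>k\<le>n. norm (a k))) powr p)) \<partial>M)
          \<le> ennreal (C powr p) * ennreal (G / real N)"
        using H[of M "shiftT N" f] pmp meas fin_int rhs by simp
      have pt: "ennreal (Mx p a g i) \<le> (SUP n. ennreal ((norm (\<Sum>k\<le>n. a k * f ((shiftT N ^^ k) (real i)))
                                    / (\<Sum>k\<le>n. norm (a k))) powr p))" for i
      proof -
        obtain n0 where n0: "n0 \<le> i" "Mx p a g i = R a g i n0 powr p" using Mx_in by blast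
        have "(\<Sum>k\<le>n0. a k * f ((shiftT N ^^ k) (real i))) = (\<Sum>k\<le>n0. a k * g (i - k))"
          by (rule sum.cong) (use n0 in \<open>auto simp: shiftT_iter fi simp del: of_nat_diff\<close>)
        then have "ennreal (Mx p a g i) = ennreal ((norm (\<Sum>k\<le>n0. a k * f ((shiftT N ^^ k) (real i)))
                                    / (\<Sum>k\<le>n0. norm (a k))) powr p)"
          using n0 by (simp add: R_def)
        also have "\<dots> \<le> (SUP n. ennreal ((norm (\<Sum>k\<le>n. a k * f ((shiftT N ^^ k) (real i)))
                                    / (\<Sum>k\<le>n. norm (a k))) powr p))"
          by (rule SUP_upper) simp
        finally show ?thesis .
      qed
      have "ennreal (X / real N) = (\<Sum>i<N. ennreal (Mx p a g i)) / of_nat N"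
        unfolding NN X_def using N
        by (simp add: sum_ennreal divide_ennreal X0[unfolded X_def] Mx_nonneg)
      also have "\<dots> \<le> (\<Sum>i<N. (SUP n. ennreal ((norm (\<Sum>k\<le>n. a k * f ((shiftT N ^^ k) (real i)))
                                    / (\<Sum>k\<le>n. norm (a k))) powr p))) / of_nat N"
        by (intro divide_right_mono_ennreal sum_mono pt)
      also have "\<dots> = (\<integral>\<^sup>+ x. (SUP n. ennreal ((norm (\<Sum>k\<le>n. a k * f ((shiftT N ^^ k) x))
                                    / (\<Sum>k\<le>n. norm (a k))) powr p)) \<partial>M)"
        by (simp add: intS)
      also have "\<dots> \<le> ennreal (C powr p) * ennreal (G / real N)" by (rule main)
      also have "\<dots> = ennreal (C powr p * (G / real N))" by (rule ennreal_mult''[symmetric]) (simp add: G0)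
      finally have "X / real N \<le> C powr p * (G / real N)"
        using G0 by (subst (asm) ennreal_le_iff) auto
      then have "X \<le> C powr p * G" using N by (simp add: divide_le_eq field_simps)
      then show ?thesis by (simp add: X_def G_def)
    qed
  qed
qed

theorem mainTheorem3:
  fixes p :: real and a :: "nat \<Rightarrow> complex"
  assumes "p > 1" and "good_weight p a"
  shows "lp_bounded p (norlund a) \<and>
         (\<forall>b :: nat \<Rightarrow> real. (\<forall>n. 0 \<le> b n) \<and> antimono b \<longrightarrow>
            lp_bounded p (norlund (\<lambda>n. a n * complex_of_real (b n))))"
proof -
  have p: "p > 0" using assms(1) by simp
  have fi: "FI p a" by (rule good_imp_FI[OF p assms(2)])
  show ?thesis
    using FI_imp_bounded[OF p fi] FI_imp_bounded[OF p FI_mult[OF p fi]] by blast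
qed

end
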